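(* If $\boldsymbol\mu$ is an invariant probability measure of the Markov transition semigroup $[\Pi_t,t\ge0]$, then $\boldsymbol\mu(\{0\}\times\mathbb R)=0$.
   Context: Fix $\delta\in\mathbb R$, $\gamma>0$, $D>0$. $[\Pi_t,t\ge0]$ is the Markov transition semigroup on $\mathbb R^2$ of the unique global strong solution of (N): $d\xi=-\xi^4\eta\,dt$, $d\eta=(\delta\xi+2\xi^3\eta^2-\gamma\xi^4\eta)dt+\sqrt{2D}\,dW$, with $W$ a standard Wiener process. *)

theory Defs
  imports "HOL-Probability.Probability"
begin

definition std_wiener :: "'a measure \<Rightarrow> (real \<Rightarrow> 'a \<Rightarrow> real) \<Rightarrow> bool" where
  "std_wiener M W \<longleftrightarrow>
     prob_space M \<and>
     (\<forall>t\<ge>0. W t \<in> borel_measurable M) \<and>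
     (\<forall>\<omega>\<in>space M. W 0 \<omega> = 0 \<and> continuous_on {0..} (\<lambda>t. W t \<omega>)) \<and>
     (\<forall>s t. 0 \<le> s \<and> s < t \<longrightarrow>
        distributed M lborel (\<lambda>\<omega>. W t \<omega> - W s \<omega>) (\<lambda>x. ennreal (normal_density 0 (sqrt (t - s)) x))) \<and>
     (\<forall>(ts :: nat \<Rightarrow> real) n. 0 \<le> ts 0 \<and> (\<forall>i<n. ts i \<le> ts (Suc i)) \<longrightarrow>
        prob_space.indep_vars M (\<lambda>_. borel) (\<lambda>i \<omega>. W (ts (Suc i)) \<omega> - W (ts i) \<omega>) {..<n})"

definition solves_N ::
  "real \<Rightarrow> real \<Rightarrow> real \<Rightarrow> 'a measure \<Rightarrow> (real \<Rightarrow> 'a \<Rightarrow> real)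
     \<Rightarrow> real \<times> real \<Rightarrow> (real \<Rightarrow> 'a \<Rightarrow> real \<times> real) \<Rightarrow> bool" where
  "solves_N \<delta> \<gamma> D M W x Y \<longleftrightarrow>
     (\<forall>t\<ge>0. Y t \<in> borel_measurable M) \<and>
     (AE \<omega> in M.
        Y 0 \<omega> = x \<and>
        continuous_on {0..} (\<lambda>t. Y t \<omega>) \<and>
        (\<forall>t\<ge>0.
           fst (Y t \<omega>) = fst x
              - integral {0..t} (\<lambda>s. fst (Y s \<omega>) ^ 4 * snd (Y s \<omega>)) \<and>
           snd (Y t \<omega>) = snd x
              + integral {0..t} (\<lambda>s. \<delta> * fst (Y s \<omega>) + 2 * fst (Y s \<omega>) ^ 3 * snd (Y s \<omega>) ^ 2
                                    - \<gamma> * fst (Y s \<omega>) ^ 4 * snd (Y s \<omega>))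
              + sqrt (2 * D) * W t \<omega>))"

text \<open>Transition semigroup (as kernels): \<Pi>_t(x, A) = P(X^x_t \<in> A).\<close>
definition trans_kernel ::
  "'a measure \<Rightarrow> (real \<times> real \<Rightarrow> real \<Rightarrow> 'a \<Rightarrow> real \<times> real) \<Rightarrow> real \<Rightarrow> real \<times> real
     \<Rightarrow> (real \<times> real) set \<Rightarrow> ennreal" where
  "trans_kernel M X t x A = emeasure M {\<omega> \<in> space M. X x t \<omega> \<in> A}"

definition invariant_prob ::
  "'a measure \<Rightarrow> (real \<times> real \<Rightarrow> real \<Rightarrow> 'a \<Rightarrow> real \<times> real) \<Rightarrow> (real \<times> real) measure \<Rightarrow> bool" where
  "invariant_prob M X \<mu> \<longleftrightarrow>
     prob_space \<mu> \<and> sets \<mu> = sets borel \<and>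
     (\<forall>t\<ge>0. \<forall>A\<in>sets borel. (\<integral>\<^sup>+ x. trans_kernel M X t x A \<partial>\<mu>) = emeasure \<mu> A)"

end

theory Submission
  imports Defs
begin

lemma nn_superadd:
  assumes h: "h \<in> borel_measurable M"
  shows "integral\<^sup>N M f + integral\<^sup>N M h \<le> (\<integral>\<^sup>+ x. f x + h x \<partial>M)"
proof -
  have ne: "{g. simple_function M g \<and> g \<le> f} \<noteq> {}"
  proof -
    have "(\<lambda>_. 0) \<in> {g. simple_function M g \<and> g \<le> f}" by (auto simp: le_fun_def)
    then show ?thesis by blast
  qed
  have "integral\<^sup>N M f + integral\<^sup>N M h = (SUP g \<in> {g. simple_function M g \<and> g \<le> f}. integral\<^sup>S M g + integral\<^sup>N M h)"
    unfolding nn_integral_def[of M f] by (rule ennreal_SUP_add_left[OF ne, symmetric])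
  also have "\<dots> \<le> (\<integral>\<^sup>+ x. f x + h x \<partial>M)"
  proof (rule SUP_least)
    fix g assume g: "g \<in> {g. simple_function M g \<and> g \<le> f}"
    then have "integral\<^sup>S M g + integral\<^sup>N M h = integral\<^sup>N M g + integral\<^sup>N M h"
      by (simp add: nn_integral_eq_simple_integral)
    also have "\<dots> = (\<integral>\<^sup>+ x. g x + h x \<partial>M)"
      using g h by (simp add: nn_integral_add borel_measurable_simple_function)
    also have "\<dots> \<le> (\<integral>\<^sup>+ x. f x + h x \<partial>M)"
      using g by (intro nn_integral_mono) (auto simp: le_fun_def add_right_mono)
    finally show "integral\<^sup>S M g + integral\<^sup>N M h \<le> (\<integral>\<^sup>+ x. f x + h x \<partial>M)" .
  qed
  finally show ?thesis .
qed

lemma xi_zero: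
  fixes \<xi> \<eta> :: "real \<Rightarrow> real"
  assumes c\<xi>: "continuous_on {0..} \<xi>" and c\<eta>: "continuous_on {0..} \<eta>"
    and eq: "\<And>t. t \<ge> 0 \<Longrightarrow> \<xi> t = - integral {0..t} (\<lambda>s. \<xi> s ^ 4 * \<eta> s)"
    and T: "T \<ge> 0"
  shows "\<xi> T = 0"
proof -
  have cT\<xi>: "continuous_on {0..T} \<xi>" using c\<xi> by (rule continuous_on_subset) auto
  have cT\<eta>: "continuous_on {0..T} \<eta>" using c\<eta> by (rule continuous_on_subset) auto
  have ci: "continuous_on {0..T} (\<lambda>s. \<xi> s ^ 4 * \<eta> s)"
    by (intro continuous_intros cT\<xi> cT\<eta>)
  have "compact ((\<lambda>s. 2 * \<xi> s ^ 3 * \<eta> s) ` {0..T})"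
    by (intro compact_continuous_image continuous_intros cT\<xi> cT\<eta>) simp
  then have "bounded ((\<lambda>s. 2 * \<xi> s ^ 3 * \<eta> s) ` {0..T})" by (rule compact_imp_bounded)
  then obtain K where K0: "\<forall>y\<in>(\<lambda>s. 2 * \<xi> s ^ 3 * \<eta> s) ` {0..T}. norm y \<le> K"
    unfolding bounded_iff by blast
  have K: "norm (2 * \<xi> s ^ 3 * \<eta> s) \<le> K" if "s \<in> {0..T}" for s
    using K0 that by blast
  define g where "g t = exp (- K * t) * \<xi> t ^ 2" for t
  have "g T \<le> g 0"
  proof (rule DERIV_nonpos_imp_decreasing_open[OF T])
    fix x assume x: "0 < x" "x < T"
    have d: "((\<lambda>u. integral {0..u} (\<lambda>s. \<xi> s ^ 4 * \<eta> s)) has_real_derivative \<xi> x ^ 4 * \<eta> x) (at x)"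
      using integral_has_vector_derivative[OF ci, of x] x
      by (simp add: at_within_Icc_at has_real_derivative_iff_has_vector_derivative)
    have d\<xi>: "(\<xi> has_real_derivative - (\<xi> x ^ 4 * \<eta> x)) (at x)"
    proof -
      have "((\<lambda>u. - integral {0..u} (\<lambda>s. \<xi> s ^ 4 * \<eta> s)) has_real_derivative - (\<xi> x ^ 4 * \<eta> x)) (at x)"
        using d by (rule DERIV_minus)
      then show ?thesis
      proof (rule has_field_derivative_transform_within_open[where S="{0<..}"])
        show "\<And>z. z \<in> {0<..} \<Longrightarrow> - integral {0..z} (\<lambda>s. \<xi> s ^ 4 * \<eta> s) = \<xi> z"
          using eq by simp
      qed (use x in auto)
    qed
    have e: "((\<lambda>t. exp (- K * t)) has_real_derivative exp (- K * x) * (- K)) (at x)"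
      by (auto intro!: derivative_eq_intros)
    have p: "((\<lambda>t. \<xi> t ^ 2) has_real_derivative 2 * (- (\<xi> x ^ 4 * \<eta> x)) * \<xi> x) (at x)"
      using DERIV_power[OF d\<xi>, of 2] by (simp add: mult.assoc)
    have "(g has_real_derivative exp (- K * x) * (- K) * \<xi> x ^ 2 + 2 * (- (\<xi> x ^ 4 * \<eta> x)) * \<xi> x * exp (- K * x)) (at x)"
      unfolding g_def by (rule DERIV_mult[OF e p])
    moreover have "exp (- K * x) * (- K) * \<xi> x ^ 2 + 2 * (- (\<xi> x ^ 4 * \<eta> x)) * \<xi> x * exp (- K * x)
        = exp (- K * x) * \<xi> x ^ 2 * (- K - 2 * \<xi> x ^ 3 * \<eta> x)"
      by (simp add: algebra_simps power2_eq_square power3_eq_cube power4_eq_xxxx)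
    moreover have "exp (- K * x) * \<xi> x ^ 2 * (- K - 2 * \<xi> x ^ 3 * \<eta> x) \<le> 0"
    proof -
      have "2 * \<xi> x ^ 3 * \<eta> x \<ge> - K" using K[of x] x by auto
      then have "- K - 2 * \<xi> x ^ 3 * \<eta> x \<le> 0" by simp
      then show ?thesis by (intro mult_nonneg_nonpos) auto
    qed
    ultimately show "\<exists>y. (g has_real_derivative y) (at x) \<and> y \<le> 0" by metis
  next
    show "continuous_on {0..T} g" unfolding g_def by (intro continuous_intros cT\<xi>)
  qed
  moreover have "g 0 = 0" using eq[of 0] by (simp add: g_def)
  ultimately have "exp (- K * T) * \<xi> T ^ 2 \<le> 0" by (simp add: g_def)
  then have "\<xi> T ^ 2 \<le> 0" by (simp add: mult_le_0_iff)
  then show ?thesis by simp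
qed


lemma nd_bound:
  assumes "t > 0"
  shows "normal_density 0 (sqrt t) x \<le> 1 / sqrt t"
proof -
  have "exp (-(x - 0)\<^sup>2/ (2 * (sqrt t)\<^sup>2)) \<le> 1" using assms by auto
  moreover have "1 / sqrt (2 * pi * (sqrt t)\<^sup>2) \<le> 1 / sqrt t"
  proof -
    have "t \<le> 2 * pi * t" using assms pi_gt3 by simp
    then have "sqrt t \<le> sqrt (2 * pi * (sqrt t)\<^sup>2)" using assms by simp
    then show ?thesis using assms by (intro divide_left_mono) auto
  qed
  moreover have "0 \<le> 1 / sqrt (2 * pi * (sqrt t)\<^sup>2)" by simp
  ultimately show ?thesis unfolding normal_density_def
    by (metis mult.right_neutral mult_mono exp_ge_zero order_trans mult_right_mono)
qed

lemma wiener_bound: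
  assumes W: "std_wiener M W" and t: "t > 0" and c: "c > 0" and R: "R \<ge> 0"
  shows "emeasure M {\<omega>\<in>space M. \<bar>a + c * W t \<omega>\<bar> \<le> R} \<le> ennreal (2 * R / (c * sqrt t))"
proof -
  have dist: "distributed M lborel (\<lambda>\<omega>. W t \<omega> - W 0 \<omega>) (\<lambda>x. ennreal (normal_density 0 (sqrt t) x))"
  proof -
    have "\<forall>s t. 0 \<le> s \<and> s < t \<longrightarrow>
        distributed M lborel (\<lambda>\<omega>. W t \<omega> - W s \<omega>) (\<lambda>x. ennreal (normal_density 0 (sqrt (t - s)) x))"
      using W unfolding std_wiener_def by blast
    then show ?thesis using t by force
  qed
  have W0: "\<And>\<omega>. \<omega> \<in> space M \<Longrightarrow> W 0 \<omega> = 0" using W unfolding std_wiener_def by blast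
  define B where "B = {(-R-a)/c .. (R-a)/c}"
  have iff: "\<bar>a + c * w\<bar> \<le> R \<longleftrightarrow> w \<in> B" for w
    using c by (auto simp: B_def pos_divide_le_eq pos_le_divide_eq abs_le_iff algebra_simps)
  have set_eq: "{\<omega>\<in>space M. \<bar>a + c * W t \<omega>\<bar> \<le> R} = (\<lambda>\<omega>. W t \<omega> - W 0 \<omega>) -` B \<inter> space M"
    using W0 iff by auto
  have "emeasure M {\<omega>\<in>space M. \<bar>a + c * W t \<omega>\<bar> \<le> R} = (\<integral>\<^sup>+x. ennreal (normal_density 0 (sqrt t) x) * indicator B x \<partial>lborel)"
    unfolding set_eq by (rule distributed_emeasure[OF dist]) (simp add: B_def)
  also have "\<dots> \<le> (\<integral>\<^sup>+x. ennreal (1 / sqrt t) * indicator B x \<partial>lborel)"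
    using nd_bound[OF t] by (intro nn_integral_mono) (auto simp: indicator_def intro: ennreal_leI)
  also have "\<dots> = ennreal (1 / sqrt t) * emeasure lborel B"
    by (rule nn_integral_cmult_indicator) (simp add: B_def)
  also have "emeasure lborel B = ennreal ((R-a)/c - (-R-a)/c)"
    unfolding B_def using c R by (subst emeasure_lborel_Icc) (auto simp: divide_right_mono)
  also have "(R-a)/c - (-R-a)/c = 2 * R / c" using c by (simp add: field_simps)
  also have "ennreal (1 / sqrt t) * ennreal (2 * R / c) = ennreal (2 * R / (c * sqrt t))"
    using t c R by (simp add: ennreal_mult[symmetric])
  finally show ?thesis .
qed


theorem lemma3:
  fixes \<delta> \<gamma> D :: real
    and M :: "'a measure" and W :: "real \<Rightarrow> 'a \<Rightarrow> real"
    and X :: "real \<times> real \<Rightarrow> real \<Rightarrow> 'a \<Rightarrow> real \<times> real"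
    and \<mu> :: "(real \<times> real) measure"
  assumes "\<gamma> > 0" and "D > 0"
    and "std_wiener M W"
    and "\<And>x. solves_N \<delta> \<gamma> D M W x (X x)"
    and "invariant_prob M X \<mu>"
  shows "emeasure \<mu> ({0} \<times> UNIV) = 0"
proof -
  note W = assms(3)
  interpret PM: prob_space M using W unfolding std_wiener_def by blast
  have Wm: "W t \<in> borel_measurable M" if "t \<ge> 0" for t
    using W that unfolding std_wiener_def by blast
  interpret Mu: prob_space \<mu> using assms(5) unfolding invariant_prob_def by blast
  have sets\<mu>: "sets \<mu> = sets borel" using assms(5) unfolding invariant_prob_def by blast
  have inv: "(\<integral>\<^sup>+ x. trans_kernel M X t x B \<partial>\<mu>) = emeasure \<mu> B" if "t \<ge> 0" "B \<in> sets borel" for t B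
    using assms(5) that unfolding invariant_prob_def by blast
  have Xm: "X x t \<in> borel_measurable M" if "t \<ge> 0" for x t
    using assms(4)[of x] that unfolding solves_N_def by blast
  define c where "c = sqrt (2 * D)"
  have c: "c > 0" using assms(2) by (simp add: c_def)
  define L where "L = {0::real} \<times> (UNIV::real set)"
  have Lb: "L \<in> sets borel" unfolding L_def
    by (intro borel_closed closed_Times) auto
  define AR where "AR n = {0::real} \<times> {- real n .. real n}" for n :: nat
  have ARb: "AR n \<in> sets borel" for n unfolding AR_def
    by (intro borel_closed closed_Times) auto
  have ARL: "AR n \<subseteq> L" for n unfolding AR_def L_def by auto
  have setm: "{\<omega> \<in> space M. X x t \<omega> \<in> B} \<in> sets M" if "t \<ge> 0" "B \<in> sets borel" for x t B
  proof -
    have "X x t -` B \<inter> space M \<in> sets M" using measurable_sets[OF Xm[OF that(1)] that(2)] .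
    moreover have "X x t -` B \<inter> space M = {\<omega> \<in> space M. X x t \<omega> \<in> B}" by auto
    ultimately show ?thesis by simp
  qed
  have path: "AE \<omega> in M. fst (X (0,y) t \<omega>) = 0 \<and> snd (X (0,y) t \<omega>) = y + c * W t \<omega>"
    if t: "t \<ge> 0" for y t
  proof -
    let ?Y = "X (0,y)"
    have ae: "AE \<omega> in M. ?Y 0 \<omega> = (0,y) \<and> continuous_on {0..} (\<lambda>t. ?Y t \<omega>) \<and>
        (\<forall>t\<ge>0.
           fst (?Y t \<omega>) = fst (0::real,y)
              - integral {0..t} (\<lambda>s. fst (?Y s \<omega>) ^ 4 * snd (?Y s \<omega>)) \<and>
           snd (?Y t \<omega>) = snd (0::real,y)
              + integral {0..t} (\<lambda>s. \<delta> * fst (?Y s \<omega>) + 2 * fst (?Y s \<omega>) ^ 3 * snd (?Y s \<omega>) ^ 2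
                                    - \<gamma> * fst (?Y s \<omega>) ^ 4 * snd (?Y s \<omega>))
              + sqrt (2 * D) * W t \<omega>)"
      using assms(4)[of "(0,y)"] unfolding solves_N_def by blast
    show ?thesis
    proof (rule AE_mp[OF ae], intro AE_I2 impI)
      fix \<omega> assume H: "?Y 0 \<omega> = (0,y) \<and> continuous_on {0..} (\<lambda>t. ?Y t \<omega>) \<and>
        (\<forall>t\<ge>0.
           fst (?Y t \<omega>) = fst (0::real,y)
              - integral {0..t} (\<lambda>s. fst (?Y s \<omega>) ^ 4 * snd (?Y s \<omega>)) \<and>
           snd (?Y t \<omega>) = snd (0::real,y)
              + integral {0..t} (\<lambda>s. \<delta> * fst (?Y s \<omega>) + 2 * fst (?Y s \<omega>) ^ 3 * snd (?Y s \<omega>) ^ 2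
                                    - \<gamma> * fst (?Y s \<omega>) ^ 4 * snd (?Y s \<omega>))
              + sqrt (2 * D) * W t \<omega>)"
      have cY: "continuous_on {0..} (\<lambda>t. ?Y t \<omega>)" using H by blast
      have c1: "continuous_on {0..} (\<lambda>s. fst (?Y s \<omega>))" using continuous_on_fst[OF cY] .
      have c2: "continuous_on {0..} (\<lambda>s. snd (?Y s \<omega>))" using continuous_on_snd[OF cY] .
      have xi0: "fst (?Y s \<omega>) = 0" if "s \<ge> 0" for s
      proof (rule xi_zero[OF c1 c2 _ that])
        fix t :: real assume "t \<ge> 0"
        then show "fst (?Y t \<omega>) = - integral {0..t} (\<lambda>s. fst (?Y s \<omega>) ^ 4 * snd (?Y s \<omega>))"
          using H by simp
      qed
      have "integral {0..t} (\<lambda>s. \<delta> * fst (?Y s \<omega>) + 2 * fst (?Y s \<omega>) ^ 3 * snd (?Y s \<omega>) ^ 2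
                                    - \<gamma> * fst (?Y s \<omega>) ^ 4 * snd (?Y s \<omega>)) = integral {0..t} (\<lambda>s. 0)"
        by (rule integral_cong) (simp add: xi0)
      then show "fst (?Y t \<omega>) = 0 \<and> snd (?Y t \<omega>) = y + c * W t \<omega>"
        using H t xi0[OF t] by (simp add: c_def)
    qed
  qed
  have g1: "trans_kernel M X t (0,y) L = 1" if t: "t \<ge> 0" for y t
    unfolding trans_kernel_def
  proof (rule PM.emeasure_eq_1_AE[OF setm[OF t Lb]])
    show "AE \<omega> in M. \<omega> \<in> {\<omega> \<in> space M. X (0, y) t \<omega> \<in> L}"
      using path[OF t, of y] by (rule AE_mp) (auto intro!: AE_I2 simp: L_def mem_Times_iff)
  qed
  have fb: "trans_kernel M X t (0,y) (AR n) \<le> ennreal (2 * real n / (c * sqrt t))" if t: "t > 0" for y t n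
  proof -
    have [measurable]: "W t \<in> borel_measurable M" using Wm t by simp
    have "trans_kernel M X t (0,y) (AR n) \<le> emeasure M {\<omega>\<in>space M. \<bar>y + c * W t \<omega>\<bar> \<le> real n}"
      unfolding trans_kernel_def
    proof (rule emeasure_mono_AE)
      show "AE \<omega> in M. \<omega> \<in> {\<omega> \<in> space M. X (0, y) t \<omega> \<in> AR n} \<longrightarrow> \<omega> \<in> {\<omega> \<in> space M. \<bar>y + c * W t \<omega>\<bar> \<le> real n}"
      proof -
        have "AE \<omega> in M. fst (X (0,y) t \<omega>) = 0 \<and> snd (X (0,y) t \<omega>) = y + c * W t \<omega>"
          using path[of t y] t by simp
        then show ?thesis
          by (rule AE_mp) (auto intro!: AE_I2 simp: AR_def mem_Times_iff abs_le_iff)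
      qed
      show "{\<omega> \<in> space M. \<bar>y + c * W t \<omega>\<bar> \<le> real n} \<in> sets M" by measurable
    qed
    also have "\<dots> \<le> ennreal (2 * real n / (c * sqrt t))"
      by (rule wiener_bound[OF W t c]) simp
    finally show ?thesis .
  qed
  have small: "measure \<mu> (AR n) \<le> e" if e: "0 < e" "e \<le> 1" for n e
  proof -
    define t where "t = ((2 * real n / c) / e)^2 + 1"
    have t0: "t > 0" unfolding t_def by (simp add: add_nonneg_pos)
    have "sqrt t \<ge> sqrt (((2 * real n / c) / e)^2)" unfolding t_def by (rule real_sqrt_le_mono) simp
    moreover have "sqrt (((2 * real n / c) / e)^2) = (2 * real n / c) / e"
      using c e by (simp only: real_sqrt_abs) simp
    ultimately have st: "sqrt t \<ge> (2 * real n / c) / e" by linarith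
    have epsb: "2 * real n / (c * sqrt t) \<le> e"
    proof -
      have "2 * real n / c \<le> sqrt t * e" using st by (simp only: pos_divide_le_eq[OF e(1)])
      then have "2 * real n / c \<le> e * sqrt t" by (simp add: mult.commute)
      moreover have "sqrt t > 0" using t0 by simp
      ultimately have "(2 * real n / c) / sqrt t \<le> e" by (simp only: pos_divide_le_eq mult.commute)
      then show ?thesis by (simp only: divide_divide_eq_left)
    qed
    define f where "f x = trans_kernel M X t x (AR n)" for x
    define g where "g x = trans_kernel M X t x L" for x
    define h where "h x = ennreal (1 - e) * indicator L x" for x :: "real \<times> real"
    have pw: "f x + h x \<le> g x" for x
    proof (cases "x \<in> L")
      case True
      then obtain y where x: "x = (0, y)" unfolding L_def by auto
      have "f x \<le> ennreal e" unfolding f_def x using fb[OF t0, of y n] epsb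
        by (meson ennreal_leI order_trans)
      then have "f x + h x \<le> ennreal e + ennreal (1 - e)" using True by (simp add: h_def add_right_mono)
      also have "\<dots> = 1" using e by (simp flip: ennreal_plus)
      also have "\<dots> = g x" unfolding g_def x using g1 t0 by simp
      finally show ?thesis .
    next
      case False
      have "f x \<le> g x" unfolding f_def g_def trans_kernel_def
        using ARL[of n] by (intro emeasure_mono setm[OF _ Lb]) (use t0 in auto)
      then show ?thesis using False by (simp add: h_def)
    qed
    have hm: "h \<in> borel_measurable \<mu>" unfolding h_def
      using Lb sets\<mu> by (intro borel_measurable_times_ennreal borel_measurable_const borel_measurable_indicator) (auto simp: measurable_cong_sets)
    have "integral\<^sup>N \<mu> f + integral\<^sup>N \<mu> h \<le> (\<integral>\<^sup>+ x. f x + h x \<partial>\<mu>)" by (rule nn_superadd[OF hm])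
    also have "\<dots> \<le> integral\<^sup>N \<mu> g" using pw by (intro nn_integral_mono) auto
    also have "integral\<^sup>N \<mu> g = emeasure \<mu> L" unfolding g_def using inv t0 Lb by simp
    finally have ineq: "emeasure \<mu> (AR n) + ennreal (1 - e) * emeasure \<mu> L \<le> emeasure \<mu> L"
      using inv[OF _ ARb, of t] t0 Lb sets\<mu> unfolding f_def h_def
      by (simp add: nn_integral_cmult_indicator)
    have "ennreal (measure \<mu> (AR n) + (1 - e) * measure \<mu> L) \<le> ennreal (measure \<mu> L)"
    proof -
      have "ennreal (1 - e) * ennreal (measure \<mu> L) = ennreal ((1 - e) * measure \<mu> L)"
        using e by (simp add: ennreal_mult)
      moreover have "ennreal (measure \<mu> (AR n)) + ennreal ((1 - e) * measure \<mu> L)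
          = ennreal (measure \<mu> (AR n) + (1 - e) * measure \<mu> L)"
        using e by (intro ennreal_plus[symmetric]) auto
      ultimately show ?thesis using ineq by (simp add: Mu.emeasure_eq_measure)
    qed
    then have "measure \<mu> (AR n) + (1 - e) * measure \<mu> L \<le> measure \<mu> L" by simp
    then have "measure \<mu> (AR n) \<le> e * measure \<mu> L" by (simp add: algebra_simps)
    also have "\<dots> \<le> e" using e Mu.prob_le_1[of L] by (simp add: mult_left_le)
    finally show ?thesis .
  qed
  have zero: "emeasure \<mu> (AR n) = 0" for n
  proof -
    have "measure \<mu> (AR n) \<le> 0"
    proof (rule ccontr)
      assume "\<not> measure \<mu> (AR n) \<le> 0"
      then have p: "measure \<mu> (AR n) > 0" by simp
      have "measure \<mu> (AR n) \<le> min 1 (measure \<mu> (AR n) / 2)" using p by (intro small) auto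
      then show False using p by simp
    qed
    then have "measure \<mu> (AR n) = 0" using measure_nonneg[of \<mu> "AR n"] by linarith
    then show ?thesis by (simp add: Mu.emeasure_eq_measure)
  qed
  have "{0} \<times> UNIV = (\<Union>n. AR n)"
  proof (intro equalityI subsetI)
    fix x :: "real \<times> real" assume "x \<in> {0} \<times> UNIV"
    moreover obtain n :: nat where "\<bar>snd x\<bar> \<le> real n" using real_arch_simple by blast
    ultimately have "x \<in> AR n" unfolding AR_def by (cases x) (auto simp: abs_le_iff)
    then show "x \<in> (\<Union>n. AR n)" by blast
  qed (auto simp: AR_def)
  also have "emeasure \<mu> (\<Union>n. AR n) = 0"
    by (rule emeasure_UN_eq_0) (use zero ARb sets\<mu> in auto)
  finally show ?thesis .
qed

end
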